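(* Let $G$ be a graph, $r \ge 1$, $L_S=(s_1,\dots,s_n)$ a subordering of $S \subseteq V(G)$, $v \in V(G)\setminus S$ and $s \in S$. Then $s \notin \mathrm{bp}(G,L_S,v)$ if and only if for all $u \in V(G)$, $$\mathrm{Wreach}_r(G,\mathrm{placebefore}(L_S,s,v),u)=\mathrm{Wreach}_r(G,\mathrm{placeafter}(L_S,s,v),u).$$
   Context: All graphs are finite, undirected, without loops. A path has length equal to its number of vertices minus one. A subordering $L_S$ is a linear ordering of $S\subseteq V(G)$; $\preceq_{L_S}$ means precedes or equal. For a subordering $L_S$ and $u,w\in V(G)$, $u\in\mathrm{Wreach}_r(G,L_S,w)$ iff either $u=w$, or $u\in S$ and there is a path $P$ of length at most $r$ between $u$ and $w$ with $u\preceq_{L_S} x$ for all $x\in V(P)\cap S$. For $L_S=(s_1,\dots,s_n)$ and $v\notin S$: $\mathrm{placeafter}(L_S,s_i,v)=(s_1,\dots,s_i,v,s_{i+1},\dots,s_n)$ and $\mathrm{placebefore}(L_S,s_i,v)=(s_1,\dots,s_{i-1},v,s_i,\dots,s_n)$, both suborderings of $S\cup\{v\}$. A vertex $s\in S$ is a breakpoint of $v$ if $\mathrm{Wreach}_r(G,\mathrm{placebefore}(L_S,s,v),v)\ne\mathrm{Wreach}_r(G,\mathrm{placeafter}(L_S,s,v),v)$; $\mathrm{bp}(G,L_S,v)\subseteq S$ denotes the set of breakpoints of $v$. *)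

theory Defs
  imports Main
begin

definition graph :: "'a set \<Rightarrow> ('a \<Rightarrow> 'a \<Rightarrow> bool) \<Rightarrow> bool" where
  "graph V E \<longleftrightarrow> finite V \<and> (\<forall>x y. E x y \<longrightarrow> x \<in> V \<and> y \<in> V)
     \<and> (\<forall>x y. E x y \<longrightarrow> E y x) \<and> (\<forall>x. \<not> E x x)"

definition is_path :: "'a set \<Rightarrow> ('a \<Rightarrow> 'a \<Rightarrow> bool) \<Rightarrow> 'a list \<Rightarrow> bool" where
  "is_path V E P \<longleftrightarrow> P \<noteq> [] \<and> distinct P \<and> set P \<subseteq> V
     \<and> (\<forall>i. Suc i < length P \<longrightarrow> E (P ! i) (P ! Suc i))"

text \<open>A subordering is a list of distinct vertices; S = set L.
  x precedes-or-equals y in L.\<close>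
definition prec_eq :: "'a list \<Rightarrow> 'a \<Rightarrow> 'a \<Rightarrow> bool" where
  "prec_eq L x y \<longleftrightarrow> (\<exists>i j. i \<le> j \<and> j < length L \<and> L ! i = x \<and> L ! j = y)"

definition wreach :: "'a set \<Rightarrow> ('a \<Rightarrow> 'a \<Rightarrow> bool) \<Rightarrow> nat \<Rightarrow> 'a list \<Rightarrow> 'a \<Rightarrow> 'a set" where
  "wreach V E r L w = {u. u = w \<or>
     (u \<in> set L \<and> (\<exists>P. is_path V E P \<and> hd P = u \<and> last P = w \<and> length P - 1 \<le> r
        \<and> (\<forall>x \<in> set P \<inter> set L. prec_eq L u x)))}"

definition pos :: "'a list \<Rightarrow> 'a \<Rightarrow> nat" where
  "pos L s = length (takeWhile (\<lambda>x. x \<noteq> s) L)"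

definition placeafter :: "'a list \<Rightarrow> 'a \<Rightarrow> 'a \<Rightarrow> 'a list" where
  "placeafter L s v = take (Suc (pos L s)) L @ v # drop (Suc (pos L s)) L"

definition placebefore :: "'a list \<Rightarrow> 'a \<Rightarrow> 'a \<Rightarrow> 'a list" where
  "placebefore L s v = take (pos L s) L @ v # drop (pos L s) L"

definition bp :: "'a set \<Rightarrow> ('a \<Rightarrow> 'a \<Rightarrow> bool) \<Rightarrow> nat \<Rightarrow> 'a list \<Rightarrow> 'a \<Rightarrow> 'a set" where
  "bp V E r L v = {s \<in> set L.
     wreach V E r (placebefore L s v) v \<noteq> wreach V E r (placeafter L s v) v}"

end

theory Submission
  imports Defs
begin

lemma pos_Cons: "pos (a#xs) x = (if a = x then 0 else Suc (pos xs x))"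
  by (simp add: pos_def)

lemma pos_append: "pos (xs@ys) x = (if x \<in> set xs then pos xs x else length xs + pos ys x)"
  by (induct xs) (simp_all add: pos_def)

lemma pos_less: "x \<in> set xs \<Longrightarrow> pos xs x < length xs"
  by (induct xs) (auto simp: pos_Cons)

lemma nth_pos: "x \<in> set xs \<Longrightarrow> xs ! pos xs x = x"
  by (induct xs) (auto simp: pos_Cons)

lemma pos_nth: "distinct xs \<Longrightarrow> i < length xs \<Longrightarrow> pos xs (xs!i) = i"
proof (induct xs arbitrary: i)
  case Nil then show ?case by simp
next
  case (Cons a xs) then show ?case
    by (cases i) (auto simp: pos_Cons)
qed

lemma prec_eq_pos: "distinct L \<Longrightarrow> prec_eq L x y \<longleftrightarrow> x \<in> set L \<and> y \<in> set L \<and> pos L x \<le> pos L y"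
  unfolding prec_eq_def
proof
  assume d: "distinct L" and "\<exists>i j. i \<le> j \<and> j < length L \<and> L ! i = x \<and> L ! j = y"
  then obtain i j where "i \<le> j" "j < length L" "L ! i = x" "L ! j = y" by blast
  then show "x \<in> set L \<and> y \<in> set L \<and> pos L x \<le> pos L y"
    using pos_nth[OF d] by auto
next
  assume "x \<in> set L \<and> y \<in> set L \<and> pos L x \<le> pos L y"
  then show "\<exists>i j. i \<le> j \<and> j < length L \<and> L ! i = x \<and> L ! j = y"
    using pos_less nth_pos by metis
qed

lemma prec_trans: "distinct L \<Longrightarrow> prec_eq L x y \<Longrightarrow> prec_eq L y z \<Longrightarrow> prec_eq L x z"
  by (auto simp: prec_eq_pos)

lemma path_take: "is_path V E P \<Longrightarrow> k < length P \<Longrightarrow> is_path V E (take (Suc k) P)"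
  unfolding is_path_def by (auto dest: in_set_takeD)

lemma path_rev:
  assumes sym: "\<forall>x y. E x y \<longrightarrow> E y x" and P: "is_path V E P"
  shows "is_path V E (rev P)"
  unfolding is_path_def
proof (intro conjI allI impI)
  show "rev P \<noteq> []" "distinct (rev P)" "set (rev P) \<subseteq> V" using P by (auto simp: is_path_def)
  fix i assume i: "Suc i < length (rev P)"
  define n where "n = length P"
  have e: "E (P ! (n - Suc (Suc i))) (P ! Suc (n - Suc (Suc i)))"
    using P i unfolding is_path_def n_def by auto
  have "Suc (n - Suc (Suc i)) = n - Suc i" using i n_def by auto
  then have "E (P ! (n - Suc i)) (P ! (n - Suc (Suc i)))" using e sym by metis
  then show "E (rev P ! i) (rev P ! Suc i)" using i n_def by (simp add: rev_nth)
qed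

locale ctx =
  fixes A B :: "'a list" and s v :: 'a
  assumes dist: "distinct (A @ s # B)" and vA: "v \<notin> set A" and vB: "v \<notin> set B" and vs: "v \<noteq> s"
begin

definition "Lb = A @ v # s # B"
definition "La = A @ s # v # B"

lemma dLb: "distinct Lb" using dist vA vB vs by (auto simp: Lb_def)
lemma dLa: "distinct La" using dist vA vB vs by (auto simp: La_def)
lemma setLab: "set La = set Lb" by (auto simp: La_def Lb_def)

lemma key:
  assumes "\<not> (w = v \<and> x = s)" "\<not> (w = s \<and> x = v)"
  shows "prec_eq Lb w x \<longleftrightarrow> prec_eq La w x"
  unfolding prec_eq_pos[OF dLb] prec_eq_pos[OF dLa]
  using assms dist vA vB vs
  by (auto simp: Lb_def La_def pos_append pos_Cons
      dest: pos_less split: if_splits)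

lemma facts: "prec_eq Lb v s" "\<not> prec_eq Lb s v" "prec_eq La s v" "\<not> prec_eq La v s"
  unfolding prec_eq_pos[OF dLb] prec_eq_pos[OF dLa]
  using dist vA vB vs
  by (auto simp: Lb_def La_def pos_append pos_Cons
      dest: pos_less split: if_splits)

lemma diff1:
  assumes a: "u \<in> wreach V E r Lb w" "u \<notin> wreach V E r La w"
  shows "u = v \<and> (\<exists>P. is_path V E P \<and> hd P = v \<and> last P = w \<and> length P - 1 \<le> r
     \<and> (\<forall>x\<in>set P \<inter> set Lb. prec_eq Lb v x) \<and> s \<in> set P)"
proof -
  have uw: "u \<noteq> w" and uL: "u \<in> set Lb" using a setLab unfolding wreach_def by auto
  obtain P where P: "is_path V E P" "hd P = u" "last P = w" "length P - 1 \<le> r"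
    "\<forall>x\<in>set P \<inter> set Lb. prec_eq Lb u x" using a uw unfolding wreach_def by auto
  have "\<not>(\<forall>x\<in>set P \<inter> set La. prec_eq La u x)" using a(2) P uL uw setLab unfolding wreach_def by auto
  then obtain x where x: "x \<in> set P" "x \<in> set La" "\<not> prec_eq La u x" by auto
  have px: "prec_eq Lb u x" using P(5) x setLab by auto
  have "u = v \<and> x = s" using key[of u x] facts px x(3) by auto
  then show ?thesis using P x by auto
qed

lemma diff2:
  assumes a: "u \<in> wreach V E r La w" "u \<notin> wreach V E r Lb w"
  shows "u = s \<and> (\<exists>P. is_path V E P \<and> hd P = s \<and> last P = w \<and> length P - 1 \<le> r
     \<and> (\<forall>x\<in>set P \<inter> set La. prec_eq La s x) \<and> v \<in> set P)"
proof -
  have uw: "u \<noteq> w" and uL: "u \<in> set La" using a setLab unfolding wreach_def by auto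
  obtain P where P: "is_path V E P" "hd P = u" "last P = w" "length P - 1 \<le> r"
    "\<forall>x\<in>set P \<inter> set La. prec_eq La u x" using a uw unfolding wreach_def by auto
  have "\<not>(\<forall>x\<in>set P \<inter> set Lb. prec_eq Lb u x)" using a(2) P uL uw setLab unfolding wreach_def by auto
  then obtain x where x: "x \<in> set P" "x \<in> set Lb" "\<not> prec_eq Lb u x" by auto
  have px: "prec_eq La u x" using P(5) x setLab by auto
  have "u = s \<and> x = v" using key[of u x] facts px x(3) by auto
  then show ?thesis using P x by auto
qed

lemma notin: "s \<notin> wreach V E r Lb v"
proof
  assume "s \<in> wreach V E r Lb v"
  then obtain P where P: "is_path V E P" "last P = v" "\<forall>x\<in>set P \<inter> set Lb. prec_eq Lb s x"
    using vs unfolding wreach_def by auto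
  have "v \<in> set P" using P(1,2) by (metis is_path_def last_in_set)
  moreover have "v \<in> set Lb" by (simp add: Lb_def)
  ultimately show False using P(3) facts by auto
qed

lemma refl_La: "x \<in> set La \<Longrightarrow> prec_eq La x x" by (simp add: prec_eq_pos[OF dLa])

lemma main_loc:
  assumes eq: "wreach V E r Lb v = wreach V E r La v" and sym: "\<forall>x y. E x y \<longrightarrow> E y x"
  shows "wreach V E r Lb u = wreach V E r La u"
proof -
  have sL: "s \<in> set La" by (simp add: La_def)
  have nsa: "s \<notin> wreach V E r La v" using eq notin[of V E r] by auto
  have c1: False if h: "x \<in> wreach V E r Lb u" "x \<notin> wreach V E r La u" for x
  proof -
    obtain P where P: "is_path V E P" "hd P = v" "last P = u" "length P - 1 \<le> r"
     "\<forall>x\<in>set P \<inter> set Lb. prec_eq Lb v x" "s \<in> set P" using diff1[OF h] by blast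
    obtain k where k: "k < length P" "P ! k = s" using P(6) by (meson in_set_conv_nth)
    define Q where "Q = rev (take (Suc k) P)"
    have Q1: "is_path V E Q" unfolding Q_def using path_rev[OF sym path_take[OF P(1) k(1)]] .
    have Q2: "hd Q = s" unfolding Q_def using k by (simp add: hd_rev take_Suc_conv_app_nth)
    have Q3: "last Q = v" unfolding Q_def using k P(2) by (simp add: last_rev)
    have Q4: "length Q - 1 \<le> r" unfolding Q_def using k P(4) by simp
    have Q5: "\<forall>y\<in>set Q \<inter> set La. prec_eq La s y"
    proof
      fix y assume y: "y \<in> set Q \<inter> set La"
      then have yP: "y \<in> set P" unfolding Q_def by (auto dest: in_set_takeD)
      show "prec_eq La s y"
      proof (cases "y = s \<or> y = v")
        case True then show ?thesis using refl_La sL facts by auto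
      next
        case False
        then have "prec_eq La v y" using key[of v y] P(5) yP y setLab by auto
        then show ?thesis using prec_trans[OF dLa] facts by blast
      qed
    qed
    have "s \<in> wreach V E r La v" unfolding wreach_def using sL Q1 Q2 Q3 Q4 Q5 by blast
    then show False using nsa by simp
  qed
  have c2: False if h: "x \<in> wreach V E r La u" "x \<notin> wreach V E r Lb u" for x
  proof -
    obtain P where P: "is_path V E P" "hd P = s" "last P = u" "length P - 1 \<le> r"
     "\<forall>x\<in>set P \<inter> set La. prec_eq La s x" "v \<in> set P" using diff2[OF h] by blast
    obtain k where k: "k < length P" "P ! k = v" using P(6) by (meson in_set_conv_nth)
    define Q where "Q = take (Suc k) P"
    have Q1: "is_path V E Q" unfolding Q_def using path_take[OF P(1) k(1)] .
    have Q2: "hd Q = s" unfolding Q_def using k P(2) by simp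
    have Q3: "last Q = v" unfolding Q_def using k by (simp add: take_Suc_conv_app_nth)
    have Q4: "length Q - 1 \<le> r" unfolding Q_def using k P(4) by simp
    have Q5: "\<forall>y\<in>set Q \<inter> set La. prec_eq La s y"
      using P(5) unfolding Q_def by (auto dest: in_set_takeD)
    have "s \<in> wreach V E r La v" unfolding wreach_def using sL Q1 Q2 Q3 Q4 Q5 by blast
    then show False using nsa by simp
  qed
  show ?thesis using c1 c2 by blast
qed

end

theorem lemma4:
  fixes V :: "'a set" and E :: "'a \<Rightarrow> 'a \<Rightarrow> bool" and r :: nat and L :: "'a list"
  assumes "graph V E" and "r \<ge> 1"
    and "distinct L" and "set L \<subseteq> V"
    and "v \<in> V" and "v \<notin> set L" and "s \<in> set L"
  shows "s \<notin> bp V E r L v \<longleftrightarrow>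
    (\<forall>u \<in> V. wreach V E r (placebefore L s v) u = wreach V E r (placeafter L s v) u)"
proof -
  define i where "i = pos L s"
  define A where "A = take i L"
  define B where "B = drop (Suc i) L"
  have il: "i < length L" and Li: "L ! i = s" using pos_less nth_pos assms(7) i_def by metis+
  have LAB: "L = A @ s # B" unfolding A_def B_def using il Li by (metis id_take_nth_drop)
  have pb: "placebefore L s v = A @ v # s # B"
    unfolding placebefore_def A_def B_def i_def[symmetric] using il Li by (simp add: Cons_nth_drop_Suc[symmetric])
  have pa: "placeafter L s v = A @ s # v # B"
    unfolding placeafter_def A_def B_def i_def[symmetric] using il Li by (simp add: take_Suc_conv_app_nth)
  interpret ctx A B s v
    using assms(3,6) LAB by unfold_locales auto
  have sym: "\<forall>x y. E x y \<longrightarrow> E y x" using assms(1) by (simp add: graph_def)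
  have "s \<notin> bp V E r L v \<longleftrightarrow> wreach V E r Lb v = wreach V E r La v"
    using assms(7) pa pb by (simp add: bp_def Lb_def La_def)
  then show ?thesis using main_loc[OF _ sym] assms(5) pa pb by (auto simp: Lb_def La_def)
qed

end
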